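(* Let $\langle A,\to\rangle$ be a conditional algebra, and for $U,V\subseteq\mathrm{Ul}(A)$ define $$U\to^{\sigma}V=\bigcup_{(O,Y)}\ \bigcap_{\substack{a,b\in A\\ \varphi(a)\subseteq O,\ Y\subseteq\varphi(b)}}\varphi(a\to b),$$ where $(O,Y)$ ranges over pairs with $O$ an open subset of the Stone space of $A$ with $U\subseteq O$ and $Y$ a closed subset with $Y\subseteq V$. Then $\langle\mathcal{P}(\mathrm{Ul}(A)),\to^{\sigma}\rangle$ is a conditional algebra.
   Context: A conditional algebra is a pair $\langle A,\to\rangle$ where $A$ is a Boolean algebra and $\to$ is a binary operation on $A$ such that for all $a,b,c$: $a\to 1=1$; $(a\to b)\wedge(a\to c)=a\to(b\wedge c)$; $(a\vee b)\to c\le (a\to c)\wedge(b\to c)$. $\mathrm{Ul}(A)$ is the set of ultrafilters of $A$ with the Stone topology (basic clopens $\varphi(a)=\{u:a\in u\}$). The operation $\to^\sigma$ is the $\sigma$-extension of $\to$ (viewed as antitone in the first and isotone in the second argument). *)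

theory Defs
  imports Main
begin

definition conditional_algebra :: "('a::boolean_algebra \<Rightarrow> 'a \<Rightarrow> 'a) \<Rightarrow> bool" where
  "conditional_algebra imp \<longleftrightarrow>
     (\<forall>a. imp a top = top) \<and>
     (\<forall>a b c. inf (imp a b) (imp a c) = imp a (inf b c)) \<and>
     (\<forall>a b c. imp (sup a b) c \<le> inf (imp a c) (imp b c))"

definition conditional_algebra_pow :: "'b set \<Rightarrow> ('b set \<Rightarrow> 'b set \<Rightarrow> 'b set) \<Rightarrow> bool" where
  "conditional_algebra_pow X imp \<longleftrightarrow>
     (\<forall>U V. U \<subseteq> X \<longrightarrow> V \<subseteq> X \<longrightarrow> imp U V \<subseteq> X) \<and>
     (\<forall>U. U \<subseteq> X \<longrightarrow> imp U X = X) \<and>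
     (\<forall>U V W. U \<subseteq> X \<longrightarrow> V \<subseteq> X \<longrightarrow> W \<subseteq> X \<longrightarrow> imp U V \<inter> imp U W = imp U (V \<inter> W)) \<and>
     (\<forall>U V W. U \<subseteq> X \<longrightarrow> V \<subseteq> X \<longrightarrow> W \<subseteq> X \<longrightarrow> imp (U \<union> V) W \<subseteq> imp U W \<inter> imp V W)"

definition ultrafilter :: "'a::boolean_algebra set \<Rightarrow> bool" where
  "ultrafilter u \<longleftrightarrow>
     top \<in> u \<and> bot \<notin> u \<and>
     (\<forall>a b. a \<in> u \<longrightarrow> a \<le> b \<longrightarrow> b \<in> u) \<and>
     (\<forall>a b. a \<in> u \<longrightarrow> b \<in> u \<longrightarrow> inf a b \<in> u) \<and>
     (\<forall>a. a \<in> u \<or> - a \<in> u)"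

definition Ul :: "'a::boolean_algebra set set" where
  "Ul = {u. ultrafilter u}"

definition phi :: "'a::boolean_algebra \<Rightarrow> 'a set set" where
  "phi a = {u \<in> Ul. a \<in> u}"

definition stone_open :: "'a::boolean_algebra set set \<Rightarrow> bool" where
  "stone_open W \<longleftrightarrow> W \<subseteq> Ul \<and> (\<forall>u\<in>W. \<exists>a. u \<in> phi a \<and> phi a \<subseteq> W)"

definition stone_closed :: "'a::boolean_algebra set set \<Rightarrow> bool" where
  "stone_closed Y \<longleftrightarrow> Y \<subseteq> Ul \<and> stone_open (Ul - Y)"

definition sigma_imp :: "('a::boolean_algebra \<Rightarrow> 'a \<Rightarrow> 'a) \<Rightarrow> 'a set set \<Rightarrow> 'a set set \<Rightarrow> 'a set set" where
  "sigma_imp imp U V =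
     (\<Union>(W, Y) \<in> {(W, Y). stone_open W \<and> U \<subseteq> W \<and> stone_closed Y \<and> Y \<subseteq> V}.
        \<Inter>{phi (imp a b) | a b. phi a \<subseteq> W \<and> Y \<subseteq> phi b})"

end

theory Submission
  imports Defs
begin

definition pf :: "'a::boolean_algebra set \<Rightarrow> bool" where
  "pf G \<longleftrightarrow> top \<in> G \<and> bot \<notin> G \<and> (\<forall>a b. a \<in> G \<longrightarrow> a \<le> b \<longrightarrow> b \<in> G)
     \<and> (\<forall>a b. a \<in> G \<longrightarrow> b \<in> G \<longrightarrow> inf a b \<in> G)"

lemma pfD: assumes "pf G"
  shows pf_top: "top \<in> G" and pf_bot: "bot \<notin> G"
    and pf_up: "\<And>a b. a \<in> G \<Longrightarrow> a \<le> b \<Longrightarrow> b \<in> G"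
    and pf_inf: "\<And>a b. a \<in> G \<Longrightarrow> b \<in> G \<Longrightarrow> inf a b \<in> G"
  using assms unfolding pf_def by blast+

lemma pf_chain:
  assumes "C \<in> chains {G. pf G \<and> F \<subseteq> G}" "C \<noteq> {}"
  shows "pf (\<Union>C)"
proof -
  have sub: "\<And>G. G \<in> C \<Longrightarrow> pf G" using assms(1) chainsD2 by blast
  show ?thesis unfolding pf_def
  proof (intro conjI allI impI)
    show "top \<in> \<Union>C" using sub assms(2) pf_top by blast
    show "bot \<notin> \<Union>C" using sub pf_bot by blast
    show "b \<in> \<Union>C" if ab2: "a \<in> \<Union>C" "a \<le> b" for a b
    proof -
      obtain G where "G \<in> C" "a \<in> G" using ab2(1) by blast
      then show ?thesis using sub pf_up ab2(2) by blast
    qed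
    show "inf a b \<in> \<Union>C" if ab: "a \<in> \<Union>C" "b \<in> \<Union>C" for a b
    proof -
      obtain G1 G2 where g: "G1 \<in> C" "G2 \<in> C" "a \<in> G1" "b \<in> G2" using ab by blast
      have "G1 \<subseteq> G2 \<or> G2 \<subseteq> G1" using chainsD[OF assms(1) g(1,2)] .
      then show ?thesis using pf_inf[OF sub[OF g(1)]] pf_inf[OF sub[OF g(2)]] g by blast
    qed
  qed
qed

lemma max_ultra:
  assumes pM: "pf M" and mx: "\<And>G. pf G \<Longrightarrow> M \<subseteq> G \<Longrightarrow> G = M"
  shows "ultrafilter M"
proof -
  have "a \<in> M \<or> - a \<in> M" for a
  proof (rule ccontr)
    assume na: "\<not> (a \<in> M \<or> - a \<in> M)"
    define G where "G = {x. \<exists>m\<in>M. inf m a \<le> x}"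
    have nb: "inf m a \<noteq> bot" if mM: "m \<in> M" for m
    proof
      assume "inf m a = bot"
      then have "m \<le> - a" by (simp add: inf_shunt)
      then have "- a \<in> M" using pf_up[OF pM mM] by blast
      then show False using na by blast
    qed
    have "pf G" unfolding pf_def
    proof (intro conjI allI impI)
      show "top \<in> G" unfolding G_def using pf_top[OF pM] by auto
      show "bot \<notin> G"
      proof
        assume "bot \<in> G"
        then obtain m where "m \<in> M" "inf m a \<le> bot" unfolding G_def by blast
        then show False using nb bot_unique by blast
      qed
      show "y \<in> G" if xy1: "x \<in> G" "x \<le> y" for x y
      proof -
        obtain m where "m \<in> M" "inf m a \<le> x" using xy1(1) unfolding G_def by blast
        then show ?thesis unfolding G_def using xy1(2) order_trans by blast
      qed
      show "inf x y \<in> G" if xy: "x \<in> G" "y \<in> G" for x y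
      proof -
        obtain m1 where m1: "m1 \<in> M" "inf m1 a \<le> x" using xy(1) unfolding G_def by blast
        obtain m2 where m2: "m2 \<in> M" "inf m2 a \<le> y" using xy(2) unfolding G_def by blast
        have "inf (inf m1 m2) a \<le> inf m1 a" "inf (inf m1 m2) a \<le> inf m2 a"
          by (auto intro: le_infI1 le_infI2)
        then have "inf (inf m1 m2) a \<le> inf x y" using m1 m2 by (meson le_inf_iff order_trans)
        moreover have "inf m1 m2 \<in> M" using pf_inf[OF pM m1(1) m2(1)] .
        ultimately show ?thesis unfolding G_def by blast
      qed
    qed
    moreover have "M \<subseteq> G" unfolding G_def using inf_le1 by blast
    moreover have "a \<in> G" using pf_top[OF pM] unfolding G_def by auto
    ultimately have "a \<in> M" using mx by metis
    then show False using na by blast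
  qed
  then show ?thesis unfolding ultrafilter_def
    using pf_top[OF pM] pf_bot[OF pM] pf_up[OF pM] pf_inf[OF pM] by blast
qed

lemma ultra_ext:
  assumes "pf F"
  shows "\<exists>u. ultrafilter u \<and> F \<subseteq> u"
proof -
  let ?A = "{G. pf G \<and> F \<subseteq> G}"
  have "\<forall>C\<in>chains ?A. \<exists>U\<in>?A. \<forall>X\<in>C. X \<subseteq> U"
  proof
    fix C assume c: "C \<in> chains ?A"
    show "\<exists>U\<in>?A. \<forall>X\<in>C. X \<subseteq> U"
    proof (cases "C = {}")
      case True then show ?thesis using assms by blast
    next
      case False
      then have "\<Union>C \<in> ?A" using pf_chain[OF c False] chainsD2[OF c] by blast
      then show ?thesis by blast
    qed
  qed
  from Zorn_Lemma2[OF this] obtain M where "M \<in> ?A" "\<forall>X\<in>?A. M \<subseteq> X \<longrightarrow> X = M" by blast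
  then have "ultrafilter M" using max_ultra[of M] by blast
  then show ?thesis using \<open>M \<in> ?A\<close> by blast
qed


lemma ufD: assumes "ultrafilter u"
  shows uf_top: "top \<in> u" and uf_bot: "bot \<notin> u"
    and uf_up: "\<And>a b. a \<in> u \<Longrightarrow> a \<le> b \<Longrightarrow> b \<in> u"
    and uf_inf: "\<And>a b. a \<in> u \<Longrightarrow> b \<in> u \<Longrightarrow> inf a b \<in> u"
    and uf_cases: "\<And>a. a \<in> u \<or> - a \<in> u"
  using assms unfolding ultrafilter_def by blast+

lemma uf_compl: assumes "ultrafilter u" shows "(- a \<in> u) \<longleftrightarrow> a \<notin> u"
proof
  assume "- a \<in> u"
  show "a \<notin> u"
  proof
    assume "a \<in> u"
    then have "inf a (- a) \<in> u" using uf_inf[OF assms] \<open>- a \<in> u\<close> by blast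
    then show False using uf_bot[OF assms] by simp
  qed
next
  assume "a \<notin> u" then show "- a \<in> u" using uf_cases[OF assms] by blast
qed

lemma uf_inf_iff: assumes "ultrafilter u" shows "(inf a b \<in> u) \<longleftrightarrow> a \<in> u \<and> b \<in> u"
proof
  assume h: "inf a b \<in> u"
  show "a \<in> u \<and> b \<in> u"
    using uf_up[OF assms h inf_le1] uf_up[OF assms h inf_le2] by (rule conjI)
next
  assume "a \<in> u \<and> b \<in> u"
  then show "inf a b \<in> u" using uf_inf[OF assms] by blast
qed

lemma uf_sup_iff: assumes "ultrafilter u" shows "(sup a b \<in> u) \<longleftrightarrow> a \<in> u \<or> b \<in> u"
proof -
  have "(sup a b \<in> u) \<longleftrightarrow> \<not> (- sup a b \<in> u)" using uf_compl[OF assms, of "sup a b"] by simp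
  also have "\<dots> \<longleftrightarrow> \<not> (inf (- a) (- b) \<in> u)" by simp
  also have "\<dots> \<longleftrightarrow> \<not> (- a \<in> u \<and> - b \<in> u)" using uf_inf_iff[OF assms, of "- a" "- b"] by simp
  also have "\<dots> \<longleftrightarrow> a \<in> u \<or> b \<in> u" using uf_compl[OF assms, of a] uf_compl[OF assms, of b] by simp
  finally show ?thesis .
qed

lemma phi_sub: "phi a \<subseteq> Ul" unfolding phi_def by blast
lemma phi_top: "phi top = Ul" unfolding phi_def Ul_def by (auto simp: uf_top)
lemma phi_bot: "phi bot = {}" unfolding phi_def Ul_def by (auto simp: uf_bot)
lemma phi_inf: "phi (inf a b) = phi a \<inter> phi b" unfolding phi_def Ul_def by (auto simp: uf_inf_iff)
lemma phi_sup: "phi (sup a b) = phi a \<union> phi b" unfolding phi_def Ul_def by (auto simp: uf_sup_iff)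
lemma phi_compl: "phi (- a) = Ul - phi a" unfolding phi_def Ul_def by (auto simp: uf_compl)

lemma phi_le: assumes "phi a \<subseteq> phi b" shows "a \<le> b"
proof (rule ccontr)
  assume nle: "\<not> a \<le> b"
  define c where "c = inf a (- b)"
  have cb: "c \<noteq> bot" using nle unfolding c_def by (simp add: inf_shunt)
  have "pf {x. c \<le> x}" unfolding pf_def
  proof (intro conjI allI impI)
    show "top \<in> {x. c \<le> x}" by simp
    show "bot \<notin> {x. c \<le> x}" using cb bot_unique by blast
    show "b \<in> {x. c \<le> x}" if "a \<in> {x. c \<le> x}" "a \<le> b" for a b using that by simp
    show "inf a b \<in> {x. c \<le> x}" if "a \<in> {x. c \<le> x}" "b \<in> {x. c \<le> x}" for a b using that by simp
  qed
  then obtain u where u: "ultrafilter u" "{x. c \<le> x} \<subseteq> u" using ultra_ext by blast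
  then have "c \<in> u" by blast
  then have "a \<in> u" "- b \<in> u" unfolding c_def using uf_inf_iff[OF u(1)] by blast+
  then have "u \<in> phi a" "u \<notin> phi b" unfolding phi_def Ul_def using u(1) uf_compl[OF u(1), of b] by simp_all
  then show False using assms by blast
qed

lemma open_phi: "stone_open (phi a)" unfolding stone_open_def using phi_sub by blast
lemma open_Ul: "stone_open Ul" unfolding stone_open_def using phi_top by blast
lemma open_empty: "stone_open {}" unfolding stone_open_def by blast
lemma closed_empty: "stone_closed {}" unfolding stone_closed_def using open_Ul by simp
lemma closed_Ul: "stone_closed Ul" unfolding stone_closed_def using open_empty by simp

lemma open_Int: assumes "stone_open W1" "stone_open W2" shows "stone_open (W1 \<inter> W2)"
  unfolding stone_open_def
proof (intro conjI ballI)
  show "W1 \<inter> W2 \<subseteq> Ul" using assms unfolding stone_open_def by blast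
  fix u assume "u \<in> W1 \<inter> W2"
  then obtain a1 a2 where "u \<in> phi a1" "phi a1 \<subseteq> W1" "u \<in> phi a2" "phi a2 \<subseteq> W2"
    using assms unfolding stone_open_def by blast
  then show "\<exists>a. u \<in> phi a \<and> phi a \<subseteq> W1 \<inter> W2" using phi_inf[of a1 a2] by blast
qed

lemma open_Un: assumes "stone_open W1" "stone_open W2" shows "stone_open (W1 \<union> W2)"
  using assms unfolding stone_open_def by blast

lemma closed_Int: assumes "stone_closed Y1" "stone_closed Y2" shows "stone_closed (Y1 \<inter> Y2)"
proof -
  have "Ul - (Y1 \<inter> Y2) = (Ul - Y1) \<union> (Ul - Y2)" by blast
  moreover have "Y1 \<inter> Y2 \<subseteq> Ul" using assms unfolding stone_closed_def by blast
  moreover have "stone_open ((Ul - Y1) \<union> (Ul - Y2))" using assms open_Un unfolding stone_closed_def by blast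
  ultimately show ?thesis unfolding stone_closed_def by simp
qed

lemma compact_sep:
  assumes Yc: "stone_closed Y" and Go: "stone_open G" and YG: "Y \<subseteq> G"
  shows "\<exists>c. Y \<subseteq> phi c \<and> phi c \<subseteq> G"
proof -
  define C where "C = {c. phi c \<subseteq> G}"
  define D where "D = {d. phi d \<inter> Y = {}}"
  have C_sup: "sup c1 c2 \<in> C" if "c1 \<in> C" "c2 \<in> C" for c1 c2
    using that unfolding C_def by (simp add: phi_sup)
  have D_sup: "sup c1 c2 \<in> D" if "c1 \<in> D" "c2 \<in> D" for c1 c2
    using that unfolding D_def by (auto simp add: phi_sup)
  have botC: "bot \<in> C" and botD: "bot \<in> D" unfolding C_def D_def by (simp_all add: phi_bot)
  have "\<exists>c\<in>C. \<exists>d\<in>D. sup c d = top"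
  proof (rule ccontr)
    assume nt: "\<not> (\<exists>c\<in>C. \<exists>d\<in>D. sup c d = top)"
    define F where "F = {x. \<exists>c\<in>C. \<exists>d\<in>D. inf (- c) (- d) \<le> x}"
    have "pf F" unfolding pf_def
    proof (intro conjI allI impI)
      show "top \<in> F" unfolding F_def using botC botD top_greatest by blast
      show "bot \<notin> F"
      proof
        assume "bot \<in> F"
        then obtain c d where "c \<in> C" "d \<in> D" "inf (- c) (- d) \<le> bot" unfolding F_def by blast
        then have "- sup c d = bot" by (simp add: bot_unique)
        then have "sup c d = top" by (metis compl_bot_eq double_compl)
        then show False using nt \<open>c \<in> C\<close> \<open>d \<in> D\<close> by blast
      qed
      show "y \<in> F" if h: "x \<in> F" "x \<le> y" for x y
        using h unfolding F_def using order_trans by blast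
      show "inf x y \<in> F" if h: "x \<in> F" "y \<in> F" for x y
      proof -
        obtain c1 d1 where 1: "c1 \<in> C" "d1 \<in> D" "inf (- c1) (- d1) \<le> x" using h(1) unfolding F_def by blast
        obtain c2 d2 where 2: "c2 \<in> C" "d2 \<in> D" "inf (- c2) (- d2) \<le> y" using h(2) unfolding F_def by blast
        have "inf (- sup c1 c2) (- sup d1 d2) \<le> inf (- c1) (- d1)" by (rule inf_mono; rule compl_mono; simp)
        moreover have "inf (- sup c1 c2) (- sup d1 d2) \<le> inf (- c2) (- d2)" by (rule inf_mono; rule compl_mono; simp)
        ultimately have "inf (- sup c1 c2) (- sup d1 d2) \<le> inf x y" using 1 2 by (meson le_inf_iff order_trans)
        then show ?thesis unfolding F_def using C_sup[OF 1(1) 2(1)] D_sup[OF 1(2) 2(2)] by blast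
      qed
    qed
    then obtain u where u: "ultrafilter u" "F \<subseteq> u" using ultra_ext by blast
    have notin: "c \<notin> u" if "c \<in> C \<or> c \<in> D" for c
    proof -
      have "inf (- c) (- bot) \<in> F \<or> inf (- bot) (- c) \<in> F" unfolding F_def using that botC botD by blast
      then have "- c \<in> u" using u(2) by auto
      then show ?thesis using uf_compl[OF u(1)] by blast
    qed
    have uU: "u \<in> Ul" using u(1) unfolding Ul_def by blast
    show False
    proof (cases "u \<in> Y")
      case True
      then obtain c where "u \<in> phi c" "phi c \<subseteq> G" using Go YG unfolding stone_open_def by blast
      then show False using notin[of c] unfolding C_def phi_def by blast
    next
      case False
      then have "u \<in> Ul - Y" using uU by blast
      then obtain d where "u \<in> phi d" "phi d \<subseteq> Ul - Y" using Yc unfolding stone_closed_def stone_open_def by blast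
      then have "d \<in> D" unfolding D_def by blast
      then show False using notin[of d] \<open>u \<in> phi d\<close> unfolding phi_def by blast
    qed
  qed
  then obtain c d where cd: "c \<in> C" "d \<in> D" "sup c d = top" by blast
  have "Y \<subseteq> phi c"
  proof
    fix y assume "y \<in> Y"
    then have "y \<in> phi (sup c d)" using cd(3) phi_top Yc unfolding stone_closed_def by auto
    then show "y \<in> phi c" using cd(2) \<open>y \<in> Y\<close> unfolding D_def phi_sup by blast
  qed
  then show ?thesis using cd(1) unfolding C_def by blast
qed

lemma mem_sigma: "u \<in> sigma_imp imp U V \<longleftrightarrow> (\<exists>W Y. stone_open W \<and> U \<subseteq> W \<and> stone_closed Y \<and> Y \<subseteq> V \<and>
     (\<forall>a b. phi a \<subseteq> W \<longrightarrow> Y \<subseteq> phi b \<longrightarrow> u \<in> phi (imp a b)))"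
proof
  assume "u \<in> sigma_imp imp U V"
  then obtain W Y where wy: "stone_open W \<and> U \<subseteq> W \<and> stone_closed Y \<and> Y \<subseteq> V"
    and m: "u \<in> \<Inter>{phi (imp a b) | a b. phi a \<subseteq> W \<and> Y \<subseteq> phi b}"
    unfolding sigma_imp_def by auto
  have "\<forall>a b. phi a \<subseteq> W \<longrightarrow> Y \<subseteq> phi b \<longrightarrow> u \<in> phi (imp a b)"
  proof (intro allI impI)
    fix a b assume "phi a \<subseteq> W" "Y \<subseteq> phi b"
    then have "phi (imp a b) \<in> {phi (imp a b) | a b. phi a \<subseteq> W \<and> Y \<subseteq> phi b}" by blast
    then show "u \<in> phi (imp a b)" using m by (rule InterD[rotated])
  qed
  then show "\<exists>W Y. stone_open W \<and> U \<subseteq> W \<and> stone_closed Y \<and> Y \<subseteq> V \<and>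
     (\<forall>a b. phi a \<subseteq> W \<longrightarrow> Y \<subseteq> phi b \<longrightarrow> u \<in> phi (imp a b))" using wy by blast
next
  assume "\<exists>W Y. stone_open W \<and> U \<subseteq> W \<and> stone_closed Y \<and> Y \<subseteq> V \<and>
     (\<forall>a b. phi a \<subseteq> W \<longrightarrow> Y \<subseteq> phi b \<longrightarrow> u \<in> phi (imp a b))"
  then obtain W Y where wy: "stone_open W \<and> U \<subseteq> W \<and> stone_closed Y \<and> Y \<subseteq> V"
    and h: "\<forall>a b. phi a \<subseteq> W \<longrightarrow> Y \<subseteq> phi b \<longrightarrow> u \<in> phi (imp a b)" by blast
  have m: "u \<in> \<Inter>{phi (imp a b) | a b. phi a \<subseteq> W \<and> Y \<subseteq> phi b}"
  proof (rule InterI)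
    fix X assume "X \<in> {phi (imp a b) | a b. phi a \<subseteq> W \<and> Y \<subseteq> phi b}"
    then obtain a b where "X = phi (imp a b)" "phi a \<subseteq> W" "Y \<subseteq> phi b" by blast
    then show "u \<in> X" using h by blast
  qed
  have pin: "(W, Y) \<in> {(W, Y). stone_open W \<and> U \<subseteq> W \<and> stone_closed Y \<and> Y \<subseteq> V}" using wy by simp
  show "u \<in> sigma_imp imp U V" unfolding sigma_imp_def
    by (rule UN_I[OF pin]) (simp only: prod.case m)
qed

lemma sigma_I:
  assumes "stone_open W" "U \<subseteq> W" "stone_closed Y" "Y \<subseteq> V"
    "\<And>a b. phi a \<subseteq> W \<Longrightarrow> Y \<subseteq> phi b \<Longrightarrow> u \<in> phi (imp a b)"
  shows "u \<in> sigma_imp imp U V"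
proof -
  have "stone_open W \<and> U \<subseteq> W \<and> stone_closed Y \<and> Y \<subseteq> V \<and>
     (\<forall>a b. phi a \<subseteq> W \<longrightarrow> Y \<subseteq> phi b \<longrightarrow> u \<in> phi (imp a b))" using assms by blast
  then have "\<exists>W Y. stone_open W \<and> U \<subseteq> W \<and> stone_closed Y \<and> Y \<subseteq> V \<and>
     (\<forall>a b. phi a \<subseteq> W \<longrightarrow> Y \<subseteq> phi b \<longrightarrow> u \<in> phi (imp a b))" by (intro exI)
  then show ?thesis by (simp only: mem_sigma)
qed

lemma sigma_E:
  assumes "u \<in> sigma_imp imp U V"
  obtains W Y where "stone_open W" "U \<subseteq> W" "stone_closed Y" "Y \<subseteq> V"
    "\<And>a b. phi a \<subseteq> W \<Longrightarrow> Y \<subseteq> phi b \<Longrightarrow> u \<in> phi (imp a b)"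
proof -
  from assms obtain W Y where "stone_open W \<and> U \<subseteq> W \<and> stone_closed Y \<and> Y \<subseteq> V \<and>
     (\<forall>a b. phi a \<subseteq> W \<longrightarrow> Y \<subseteq> phi b \<longrightarrow> u \<in> phi (imp a b))" by (simp only: mem_sigma) blast
  then show ?thesis using that by blast
qed

theorem theorem2p15:
  fixes imp :: "'a::boolean_algebra \<Rightarrow> 'a \<Rightarrow> 'a"
  assumes "conditional_algebra imp"
  shows "conditional_algebra_pow (Ul :: 'a set set) (sigma_imp imp)"
proof -
  have ax1: "\<And>a. imp a top = top" and ax2: "\<And>a b c. inf (imp a b) (imp a c) = imp a (inf b c)"
    using assms unfolding conditional_algebra_def by blast+
  have P1: "sigma_imp imp U V \<subseteq> Ul" for U V :: "'a set set"
  proof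
    fix u assume "u \<in> sigma_imp imp U V"
    then obtain W Y where "stone_open W" "U \<subseteq> W" "stone_closed Y" "Y \<subseteq> V"
      and h: "\<And>a b. phi a \<subseteq> W \<Longrightarrow> Y \<subseteq> phi b \<Longrightarrow> u \<in> phi (imp a b)"
      by (rule sigma_E) blast
    have "Y \<subseteq> phi top" unfolding phi_top using \<open>stone_closed Y\<close> unfolding stone_closed_def by blast
    then have "u \<in> phi (imp bot top)" using h[of bot top] by (simp add: phi_bot)
    then show "u \<in> Ul" using phi_sub by blast
  qed
  have P2: "sigma_imp imp U Ul = Ul" if UU: "U \<subseteq> Ul" for U :: "'a set set"
  proof
    show "sigma_imp imp U Ul \<subseteq> Ul" by (rule P1)
    show "Ul \<subseteq> sigma_imp imp U Ul"
    proof
      fix u :: "'a set" assume uU: "u \<in> Ul"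
      have h: "u \<in> phi (imp a b)" if "phi a \<subseteq> Ul" "Ul \<subseteq> phi b" for a b
      proof -
        have "phi top \<subseteq> phi b" using that(2) by (simp add: phi_top)
        then have "top \<le> b" by (rule phi_le)
        then have "b = top" using top_unique by blast
        then show "u \<in> phi (imp a b)" using ax1 uU by (simp add: phi_top)
      qed
      show "u \<in> sigma_imp imp U Ul" using open_Ul UU closed_Ul order_refl h by (rule sigma_I)
    qed
  qed
  have mono2: "sigma_imp imp U V \<subseteq> sigma_imp imp U V'" if VV: "V \<subseteq> V'" for U V V' :: "'a set set"
  proof
    fix u assume "u \<in> sigma_imp imp U V"
    then obtain W Y where "stone_open W" "U \<subseteq> W" "stone_closed Y" "Y \<subseteq> V"
      "\<And>a b. phi a \<subseteq> W \<Longrightarrow> Y \<subseteq> phi b \<Longrightarrow> u \<in> phi (imp a b)" by (rule sigma_E) blast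
    moreover have "Y \<subseteq> V'" using \<open>Y \<subseteq> V\<close> VV by (rule order_trans)
    ultimately show "u \<in> sigma_imp imp U V'" by (intro sigma_I)
  qed
  have anti1: "sigma_imp imp U' V \<subseteq> sigma_imp imp U V" if UU: "U \<subseteq> U'" for U U' V :: "'a set set"
  proof
    fix u assume "u \<in> sigma_imp imp U' V"
    then obtain W Y where "stone_open W" "U' \<subseteq> W" "stone_closed Y" "Y \<subseteq> V"
      "\<And>a b. phi a \<subseteq> W \<Longrightarrow> Y \<subseteq> phi b \<Longrightarrow> u \<in> phi (imp a b)" by (rule sigma_E) blast
    moreover have "U \<subseteq> W" using UU \<open>U' \<subseteq> W\<close> by (rule order_trans)
    ultimately show "u \<in> sigma_imp imp U V" by (intro sigma_I)
  qed
  have P3: "sigma_imp imp U V \<inter> sigma_imp imp U V' \<subseteq> sigma_imp imp U (V \<inter> V')" for U V V' :: "'a set set"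
  proof
    fix u assume uu: "u \<in> sigma_imp imp U V \<inter> sigma_imp imp U V'"
    then have "u \<in> sigma_imp imp U V" by (rule IntD1)
    then obtain W1 Y1 where o1: "stone_open W1" "U \<subseteq> W1" "stone_closed Y1" "Y1 \<subseteq> V"
      and h1: "\<And>a b. phi a \<subseteq> W1 \<Longrightarrow> Y1 \<subseteq> phi b \<Longrightarrow> u \<in> phi (imp a b)"
      by (rule sigma_E) blast
    from uu have "u \<in> sigma_imp imp U V'" by (rule IntD2)
    then obtain W2 Y2 where o2: "stone_open W2" "U \<subseteq> W2" "stone_closed Y2" "Y2 \<subseteq> V'"
      and h2: "\<And>a b. phi a \<subseteq> W2 \<Longrightarrow> Y2 \<subseteq> phi b \<Longrightarrow> u \<in> phi (imp a b)"
      by (rule sigma_E) blast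
    have hh: "u \<in> phi (imp a b)" if aW: "phi a \<subseteq> W1 \<inter> W2" and Yb: "Y1 \<inter> Y2 \<subseteq> phi b" for a b
    proof -
      have G: "stone_open (phi b \<union> (Ul - Y2))" using open_Un[OF open_phi] o2(3) unfolding stone_closed_def by blast
      have "Y1 \<subseteq> phi b \<union> (Ul - Y2)" using Yb o1(3) unfolding stone_closed_def by blast
      then obtain c where c1: "Y1 \<subseteq> phi c" and c2: "phi c \<subseteq> phi b \<union> (Ul - Y2)"
        using compact_sep[OF o1(3) G] by blast
      have "Y1 \<subseteq> phi (sup b c)" unfolding phi_sup using c1 by blast
      moreover have "phi a \<subseteq> W1" using aW by blast
      ultimately have u1: "u \<in> phi (imp a (sup b c))" by (rule h1[rotated])
      have "Y2 \<subseteq> phi (sup b (- c))"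
      proof
        fix y assume yY: "y \<in> Y2"
        then have yU: "y \<in> Ul" using o2(3) unfolding stone_closed_def by blast
        show "y \<in> phi (sup b (- c))"
        proof (cases "y \<in> phi c")
          case True then show ?thesis unfolding phi_sup using c2 yY by blast
        next
          case False then show ?thesis unfolding phi_sup phi_compl using yU by blast
        qed
      qed
      moreover have "phi a \<subseteq> W2" using aW by blast
      ultimately have u2: "u \<in> phi (imp a (sup b (- c)))" by (rule h2[rotated])
      have "u \<in> phi (inf (imp a (sup b c)) (imp a (sup b (- c))))" unfolding phi_inf using u1 u2 by blast
      also have "inf (imp a (sup b c)) (imp a (sup b (- c))) = imp a (inf (sup b c) (sup b (- c)))"
        by (rule ax2)
      also have "inf (sup b c) (sup b (- c)) = b" by (simp add: sup_inf_distrib1[symmetric])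
      finally show "u \<in> phi (imp a b)" .
    qed
    have "stone_open (W1 \<inter> W2)" using o1(1) o2(1) by (rule open_Int)
    moreover have "U \<subseteq> W1 \<inter> W2" using o1(2) o2(2) by blast
    moreover have "stone_closed (Y1 \<inter> Y2)" using o1(3) o2(3) by (rule closed_Int)
    moreover have "Y1 \<inter> Y2 \<subseteq> V \<inter> V'" using o1(4) o2(4) by blast
    ultimately show "u \<in> sigma_imp imp U (V \<inter> V')" using hh by (rule sigma_I)
  qed
  show ?thesis unfolding conditional_algebra_pow_def
  proof (intro conjI allI impI)
    show "sigma_imp imp U V \<subseteq> Ul" for U V by (rule P1)
    show "sigma_imp imp U Ul = Ul" if "U \<subseteq> Ul" for U using that by (rule P2)
    show "sigma_imp imp U V \<inter> sigma_imp imp U W = sigma_imp imp U (V \<inter> W)" for U V W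
      using P3[of U V W] mono2[of "V \<inter> W" V U] mono2[of "V \<inter> W" W U] by blast
    show "sigma_imp imp (U \<union> V) W \<subseteq> sigma_imp imp U W \<inter> sigma_imp imp V W" for U V W
      using anti1[of U "U \<union> V" W] anti1[of V "U \<union> V" W] by blast
  qed
qed

end
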